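(* Let $(X,Y,\eta,\mu,\psi,\epsilon,\delta,\phi)$ be a left Frobenius pair in a monoidal category $(\mathfrak{C},\otimes,\mathbbm{1})$. Then $\phi$ is a homomorphism of right $X$-modules and $\psi$ is a homomorphism of right $Y$-comodules, i.e. \[ (Y\otimes \mu)\circ(\phi\otimes X)=\phi\circ\mu \colon X\otimes X\to Y\otimes X, \qquad (\psi\otimes Y)\circ(X\otimes\delta)=\delta\circ\psi\colon X\otimes Y\to Y\otimes Y. \]
   Context: Throughout, $(\mathfrak{C},\otimes,\mathbbm{1})$ is a monoidal category; associativity and unit isomorphisms are suppressed (identifying $\mathbbm{1}\otimes A=A=A\otimes\mathbbm{1}$). A \emph{left Frobenius pair} in $\mathfrak{C}$ consists of objects $X,Y$ and morphisms $\epsilon\colon Y\to\mathbbm{1}$, $\eta\colon\mathbbm{1}\to X$, $\delta\colon Y\to Y\otimes Y$, $\mu\colon X\otimes X\to X$, $\phi\colon X\to Y\otimes X$, $\psi\colon X\otimes Y\to Y$ such that: (1a) $(X,\eta,\mu)$ is an associative unital monoid: $\mu(\mu\otimes X)=\mu(X\otimes\mu)$, $\mu(\eta\otimes X)=\mathrm{id}_X=\mu(X\otimes\eta)$; (1b) $(Y,\epsilon,\delta)$ is a coassociative counital comonoid: $(\delta\otimes Y)\delta=(Y\otimes\delta)\delta$, $(\epsilon\otimes Y)\delta=\mathrm{id}_Y=(Y\otimes\epsilon)\delta$; (2a) $\psi$ is a left $X$-module structure on $Y$: $\psi(\mu\otimes Y)=\psi(X\otimes\psi)$, $\psi(\eta\otimes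 Y)=\mathrm{id}_Y$; (2b) $\phi$ is a left $Y$-comodule structure on $X$: $(\delta\otimes X)\phi=(Y\otimes\phi)\phi$, $(\epsilon\otimes X)\phi=\mathrm{id}_X$; (3a) $\phi$ is a left $X$-module map: $\phi\circ\mu=(\psi\otimes X)\circ(X\otimes\phi)$; (3b) $\psi$ is a left $Y$-comodule map: $\delta\circ\psi=(Y\otimes\psi)\circ(\phi\otimes Y)$. *)

theory Defs
  imports Main
begin

text \<open>A monoidal category, presented in strict form (associativity and unit
isomorphisms suppressed, as in the paper).\<close>

record ('o, 'm) moncat =
  Dom :: "'m \<Rightarrow> 'o"
  Cod :: "'m \<Rightarrow> 'o"
  Cmp :: "'m \<Rightarrow> 'm \<Rightarrow> 'm"
  Idm :: "'o \<Rightarrow> 'm"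
  TObj :: "'o \<Rightarrow> 'o \<Rightarrow> 'o"
  TMor :: "'m \<Rightarrow> 'm \<Rightarrow> 'm"
  Unit :: "'o"

definition hom :: "('o, 'm, 'z) moncat_scheme \<Rightarrow> 'o \<Rightarrow> 'o \<Rightarrow> 'm set" where
  "hom C A B = {f. Dom C f = A \<and> Cod C f = B}"

definition strict_monoidal_category :: "('o, 'm, 'z) moncat_scheme \<Rightarrow> bool" where
  "strict_monoidal_category C \<longleftrightarrow>
     \<comment> \<open>category axioms\<close>
     (\<forall>A. Dom C (Idm C A) = A \<and> Cod C (Idm C A) = A) \<and>
     (\<forall>f g. Cod C f = Dom C g \<longrightarrow>
        Dom C (Cmp C g f) = Dom C f \<and> Cod C (Cmp C g f) = Cod C g) \<and>
     (\<forall>f. Cmp C f (Idm C (Dom C f)) = f \<and> Cmp C (Idm C (Cod C f)) f = f) \<and>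
     (\<forall>f g h. Cod C f = Dom C g \<and> Cod C g = Dom C h \<longrightarrow>
        Cmp C h (Cmp C g f) = Cmp C (Cmp C h g) f) \<and>
     \<comment> \<open>tensor is a bifunctor\<close>
     (\<forall>f g. Dom C (TMor C f g) = TObj C (Dom C f) (Dom C g) \<and>
            Cod C (TMor C f g) = TObj C (Cod C f) (Cod C g)) \<and>
     (\<forall>A B. TMor C (Idm C A) (Idm C B) = Idm C (TObj C A B)) \<and>
     (\<forall>f g f' g'. Cod C f = Dom C g \<and> Cod C f' = Dom C g' \<longrightarrow>
        TMor C (Cmp C g f) (Cmp C g' f') = Cmp C (TMor C g g') (TMor C f f')) \<and>
     \<comment> \<open>strict associativity and unit\<close>
     (\<forall>A B D. TObj C (TObj C A B) D = TObj C A (TObj C B D)) \<and>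
     (\<forall>A. TObj C (Unit C) A = A \<and> TObj C A (Unit C) = A) \<and>
     (\<forall>f g h. TMor C (TMor C f g) h = TMor C f (TMor C g h)) \<and>
     (\<forall>f. TMor C (Idm C (Unit C)) f = f \<and> TMor C f (Idm C (Unit C)) = f)"

definition left_frobenius_pair ::
  "('o, 'm, 'z) moncat_scheme \<Rightarrow> 'o \<Rightarrow> 'o \<Rightarrow> 'm \<Rightarrow> 'm \<Rightarrow> 'm \<Rightarrow> 'm \<Rightarrow> 'm \<Rightarrow> 'm \<Rightarrow> bool"
where
  "left_frobenius_pair C X Y eps eta delta mu phi psi \<longleftrightarrow>
    (let T = TMor C; cp = Cmp C; iX = Idm C X; iY = Idm C Y in
     eps \<in> hom C Y (Unit C) \<and>
     eta \<in> hom C (Unit C) X \<and>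
     delta \<in> hom C Y (TObj C Y Y) \<and>
     mu \<in> hom C (TObj C X X) X \<and>
     phi \<in> hom C X (TObj C Y X) \<and>
     psi \<in> hom C (TObj C X Y) Y \<and>
     \<comment> \<open>(1a)\<close>
     cp mu (T mu iX) = cp mu (T iX mu) \<and>
     cp mu (T eta iX) = iX \<and> cp mu (T iX eta) = iX \<and>
     \<comment> \<open>(1b)\<close>
     cp (T delta iY) delta = cp (T iY delta) delta \<and>
     cp (T eps iY) delta = iY \<and> cp (T iY eps) delta = iY \<and>
     \<comment> \<open>(2a)\<close>
     cp psi (T mu iY) = cp psi (T iX psi) \<and>
     cp psi (T eta iY) = iY \<and>
     \<comment> \<open>(2b)\<close>
     cp (T delta iX) phi = cp (T iY phi) phi \<and>
     cp (T eps iX) phi = iX \<and>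
     \<comment> \<open>(3a)\<close>
     cp phi mu = cp (T psi iX) (T iX phi) \<and>
     \<comment> \<open>(3b)\<close>
     cp delta psi = cp (T iY psi) (T phi iY))"

end

theory Submission
  imports Defs
begin

locale smc =
  fixes C :: "('o, 'm, 'z) moncat_scheme"
  assumes smc: "strict_monoidal_category C"
begin

abbreviation "D \<equiv> Dom C"
abbreviation "K \<equiv> Cod C"
abbreviation "cp \<equiv> Cmp C"
abbreviation "I \<equiv> Idm C"
abbreviation "T \<equiv> TMor C"
abbreviation "TO \<equiv> TObj C"
abbreviation "U \<equiv> Unit C"

lemma idD[simp]: "D (I A) = A" and idK[simp]: "K (I A) = A"
  using smc unfolding strict_monoidal_category_def by auto
lemma cpD[simp]: "K f = D g \<Longrightarrow> D (cp g f) = D f"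
  and cpK[simp]: "K f = D g \<Longrightarrow> K (cp g f) = K g"
  using smc unfolding strict_monoidal_category_def by auto
lemma idr[simp]: "K f = A \<Longrightarrow> cp (I A) f = f" and idl[simp]: "D f = A \<Longrightarrow> cp f (I A) = f"
  using smc unfolding strict_monoidal_category_def by auto
lemma assoc: "K f = D g \<Longrightarrow> K g = D h \<Longrightarrow> cp h (cp g f) = cp (cp h g) f"
  using smc unfolding strict_monoidal_category_def by auto
lemma TD[simp]: "D (T f g) = TO (D f) (D g)" and TK[simp]: "K (T f g) = TO (K f) (K g)"
  using smc unfolding strict_monoidal_category_def by auto
lemma Tid[simp]: "T (I A) (I B) = I (TO A B)"
  using smc unfolding strict_monoidal_category_def by auto
lemma inter: "K f = D g \<Longrightarrow> K f' = D g' \<Longrightarrow> cp (T g g') (T f f') = T (cp g f) (cp g' f')"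
  using smc unfolding strict_monoidal_category_def by auto
lemma TOU[simp]: "TO U A = A" "TO A U = A"
  using smc unfolding strict_monoidal_category_def by auto
lemma TOa[simp]: "TO (TO A B) E = TO A (TO B E)"
  using smc unfolding strict_monoidal_category_def by auto
lemma Ta[simp]: "T (T f g) h = T f (T g h)"
  using smc unfolding strict_monoidal_category_def by auto
lemma TU[simp]: "T (I U) f = f" "T f (I U) = f"
  using smc unfolding strict_monoidal_category_def by auto
lemma Tid2[simp]: "T (I A) (T (I B) g) = T (I (TO A B)) g"
  by (metis Ta Tid)
lemma TL: "K b = D a \<Longrightarrow> cp (T (I A) a) (T (I A) b) = T (I A) (cp a b)"
  by (simp add: inter)
lemma TR: "K b = D a \<Longrightarrow> cp (T a (I A)) (T b (I A)) = T (cp a b) (I A)"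
  by (simp add: inter)

end

theorem mainTheorem1:
  fixes C :: "('o, 'm, 'z) moncat_scheme"
  assumes "strict_monoidal_category C"
    and "left_frobenius_pair C X Y eps eta delta mu phi psi"
  shows "Cmp C (TMor C (Idm C Y) mu) (TMor C phi (Idm C X)) = Cmp C phi mu \<and>
         Cmp C (TMor C psi (Idm C Y)) (TMor C (Idm C X) delta) = Cmp C delta psi"
proof -
  interpret smc C by (rule smc.intro) (rule assms(1))
  note F = assms(2)[unfolded left_frobenius_pair_def Let_def hom_def, simplified]
  have eps: "D eps = Y" "K eps = U" and eta: "D eta = U" "K eta = X"
    and del: "D delta = Y" "K delta = TO Y Y" and mu: "D mu = TO X X" "K mu = X"
    and phi: "D phi = X" "K phi = TO Y X" and psi: "D psi = TO X Y" "K psi = Y"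
    using F by auto
  note dk = eps eta del mu phi psi
  have u1: "cp mu (T eta (I X)) = I X" and u2: "cp mu (T (I X) eta) = I X"
    and c1: "cp (T eps (I Y)) delta = I Y" and c2: "cp (T (I Y) eps) delta = I Y"
    and m2: "cp psi (T eta (I Y)) = I Y" and cm2: "cp (T eps (I X)) phi = I X"
    and f3a: "cp phi mu = cp (T psi (I X)) (T (I X) phi)"
    and f3b: "cp delta psi = cp (T (I Y) psi) (T phi (I Y))"
    using F by auto
  have a1: "cp eps psi \<noteq> undefined \<or> True" by simp
  define e where "e = cp phi eta"
  define f where "f = cp eps psi"
  have e: "D e = U" "K e = TO Y X" using dk by (simp_all add: e_def)
  have f: "D f = TO X Y" "K f = U" using dk by (simp_all add: f_def)
  have sA: "delta = cp (T (I Y) psi) (T e (I Y))"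
  proof -
    have "delta = cp delta (cp psi (T eta (I Y)))" using F dk by simp
    also have "\<dots> = cp (cp (T (I Y) psi) (T phi (I Y))) (T eta (I Y))"
      using dk by (simp add: assoc[of "T eta (I Y)" psi delta] f3b)
    also have "\<dots> = cp (T (I Y) psi) (T e (I Y))"
      using dk by (simp add: assoc[symmetric] inter e_def)
    finally show ?thesis .
  qed
  have sB: "phi = cp (T psi (I X)) (T (I X) e)"
  proof -
    have "phi = cp phi (cp mu (T (I X) eta))" using F dk by simp
    also have "\<dots> = cp (cp (T psi (I X)) (T (I X) phi)) (T (I X) eta)"
      using dk by (simp add: assoc[of "T (I X) eta" mu phi] f3a)
    also have "\<dots> = cp (T psi (I X)) (T (I X) e)"
      using dk by (simp add: assoc[symmetric] inter e_def)
    finally show ?thesis .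
  qed
  have p2: "cp (T psi (I Y)) (T (I X) delta) = cp delta psi"
  proof -
    have "cp (T psi (I Y)) (T (I X) delta)
        = cp (T psi (I Y)) (cp (T (I X) (T (I Y) psi)) (T (I X) (T e (I Y))))"
      using dk e by (subst sA) (simp add: TL[symmetric])
    also have "\<dots> = cp (T psi psi) (T (I X) (T e (I Y)))"
      using dk e by (simp add: assoc inter)
    finally have L: "cp (T psi (I Y)) (T (I X) delta) = cp (T psi psi) (T (I X) (T e (I Y)))" .
    have "cp delta psi = cp (T (I Y) psi) (T phi (I Y))" using F by simp
    also have "\<dots> = cp (T (I Y) psi) (cp (T psi (T (I X) (I Y))) (T (I X) (T e (I Y))))"
      using dk e by (subst sB) (simp add: TR[symmetric])
    also have "\<dots> = cp (T psi psi) (T (I X) (T e (I Y)))"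
      using dk e by (simp add: assoc inter)
    finally show ?thesis using L by simp
  qed
  have sC: "mu = cp (T f (I X)) (T (I X) phi)"
  proof -
    have "mu = cp (cp (T eps (I X)) phi) mu" using F dk by simp
    also have "\<dots> = cp (T eps (I X)) (cp (T psi (I X)) (T (I X) phi))"
      using dk by (simp add: assoc[of mu phi "T eps (I X)", symmetric] f3a)
    also have "\<dots> = cp (T f (I X)) (T (I X) phi)"
      using dk by (simp add: assoc inter f_def)
    finally show ?thesis .
  qed
  have sD: "psi = cp (T (I Y) f) (T phi (I Y))"
  proof -
    have "psi = cp (cp (T (I Y) eps) delta) psi" using F dk by simp
    also have "\<dots> = cp (T (I Y) eps) (cp (T (I Y) psi) (T phi (I Y)))"
      using dk by (simp add: assoc[of psi delta "T (I Y) eps", symmetric] f3b)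
    also have "\<dots> = cp (T (I Y) f) (T phi (I Y))"
      using dk by (simp add: assoc inter f_def)
    finally show ?thesis .
  qed
  have p1: "cp (T (I Y) mu) (T phi (I X)) = cp phi mu"
  proof -
    have "cp (T (I Y) mu) (T phi (I X))
        = cp (cp (T (I Y) (T f (I X))) (T (I Y) (T (I X) phi))) (T phi (I X))"
      using dk f by (subst sC) (simp add: TL[symmetric])
    also have "\<dots> = cp (T (I Y) (T f (I X))) (T phi phi)"
      using dk f by (simp add: assoc[symmetric] inter)
    finally have L: "cp (T (I Y) mu) (T phi (I X)) = cp (T (I Y) (T f (I X))) (T phi phi)" .
    have "cp phi mu = cp (T psi (I X)) (T (I X) phi)" using F by simp
    also have "\<dots> = cp (cp (T (I Y) (T f (I X))) (T phi (T (I Y) (I X)))) (T (I X) phi)"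
      using dk f by (subst sD) (simp add: TR[symmetric])
    also have "\<dots> = cp (T (I Y) (T f (I X))) (T phi phi)"
      using dk f by (simp add: assoc[symmetric] inter)
    finally show ?thesis using L by simp
  qed
  show ?thesis using p1 p2 by simp
qed

end
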